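(* Fix $N>0$ (packet size in bits), $\epsilon\in(0,1)$ (block error probability) and a minimum blocklength $\hat m>0$. For $m>0$ and $\gamma>0$ let $$F(m,\gamma)=\sqrt{\frac{1}{m}\left(1-\frac{1}{(\gamma+1)^2}\right)}\,\frac{Q^{-1}(\epsilon)}{\ln 2}-\log_2(1+\gamma)+\frac{N}{m},$$ and let $\Gamma(m)$ denote the implicit function defined by $F(m,\Gamma(m))=0$, $\Gamma(m)>0$. If $$\frac{Q^{-1}(\epsilon)}{\sqrt{N}}\le \frac{2\sqrt{\ln 2}}{4-\sqrt{2}}=0.64394\ldots,$$ then the function $m\mapsto m\,\Gamma(m)$ is strictly decreasing on $\{m: m\ge \hat m\}$.
   Context: $Q^{-1}(\cdot)$ is the inverse of the Gaussian Q-function $Q(t)=\frac{1}{\sqrt{2\pi}}\int_t^\infty e^{-u^2/2}\,du$. The equation $F(m,\gamma)=0$ is the finite-blocklength achievable-rate relation $\frac{N}{m}=\log_2(1+\gamma)-\sqrt{\frac1m\big(1-\frac{1}{(1+\gamma)^2}\big)}\frac{Q^{-1}(\epsilon)}{\ln 2}$ for blocklength $m$ and SINR $\gamma$; $\Gamma(m)$ is the SINR required to send $N$ bits in $m$ channel uses with error probability $\epsilon$, and $m\Gamma(m)$ is (proportional to) the corresponding energy. *)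

theory Defs
  imports "HOL-Analysis.Analysis"
begin

definition gaussQ :: "real \<Rightarrow> real" where
  "gaussQ t = (1 / sqrt (2 * pi)) * integral {t..} (\<lambda>u. exp (- (u\<^sup>2) / 2))"

text \<open>Inverse of the Q-function (Q is a strictly decreasing bijection from the reals onto (0,1)).\<close>
definition gaussQinv :: "real \<Rightarrow> real" where
  "gaussQinv e = (THE t. gaussQ t = e)"

definition Ffb :: "nat \<Rightarrow> real \<Rightarrow> real \<Rightarrow> real \<Rightarrow> real" where
  "Ffb N eps m \<gamma> =
     sqrt ((1 / m) * (1 - 1 / (\<gamma> + 1)\<^sup>2)) * gaussQinv eps / ln 2
     - log 2 (1 + \<gamma>) + real N / m"

end

theory Submission
  imports Defs
begin


lemma ln_lower: fixes x :: real assumes "x \<ge> 0" shows "2*x/(2+x) \<le> ln (1+x)"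
proof -
  let ?f = "\<lambda>x::real. ln (1+x) - 2*x/(2+x)"
  have "?f 0 \<le> ?f x"
  proof (rule DERIV_nonneg_imp_nondecreasing[OF assms])
    fix t :: real assume t: "0 \<le> t" "t \<le> x"
    have "DERIV ?f t :> (1/(1+t) - (2*(2+t) - 2*t)/(2+t)^2)"
      using t by (auto intro!: derivative_eq_intros simp: power2_eq_square)
    moreover have "1/(1+t) - (2*(2+t) - 2*t)/(2+t)^2 = t^2/((1+t)*(2+t)^2)"
      using t by (simp add: divide_simps power2_eq_square) (simp add: algebra_simps)
    moreover have "t^2/((1+t)*(2+t)^2) \<ge> 0" using t by simp
    ultimately show "\<exists>y. DERIV ?f t :> y \<and> 0 \<le> y" by metis
  qed
  then show ?thesis by simp
qed

definition ww :: "real \<Rightarrow> real" where "ww x = sqrt (1 - 1/(x+1)^2)"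

lemma ww_sq: assumes "x > 0" shows "(ww x)^2 * (x+1)^2 = x*(x+2)" and "ww x > 0"
proof -
  have "(x+1)^2 > 1" using assms by (intro one_less_power) auto
  then have h: "1 - 1/(x+1)^2 > 0" using divide_less_eq_1 by fastforce
  have nz: "(x + 1)^2 \<noteq> 0" using assms by simp
  have e1: "(ww x)^2 = 1 - 1/(x+1)^2" unfolding ww_def using h by simp
  have e2: "(1 - 1/(x+1)^2) * (x+1)^2 = (x+1)^2 - 1" using nz by (simp add: algebra_simps)
  show "(ww x)^2 * (x+1)^2 = x*(x+2)" unfolding e1 e2 by (simp add: power2_eq_square algebra_simps)
  show "ww x > 0" unfolding ww_def using h by simp
qed

lemma ww_deriv: assumes "x > 0" shows "DERIV ww x :> 1/((x+1)^3 * ww x)"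
proof -
  have "(x+1)^2 > 1" using assms by (intro one_less_power) auto
  then have h: "1 - 1/(x+1)^2 > 0" using divide_less_eq_1 by fastforce
  have d1: "DERIV (\<lambda>x. 1 - 1/(x+1)^2) x :> 2/(x+1)^3"
  proof -
    have nz: "x + 1 \<noteq> 0" using assms by simp
    show ?thesis using nz apply (auto intro!: derivative_eq_intros)
      by (simp add: divide_simps) (simp add: algebra_simps numeral_eq_Suc)
  qed
  have "DERIV (\<lambda>x. sqrt (1 - 1/(x+1)^2)) x :> inverse (sqrt (1 - 1/(x+1)^2)) / 2 * (2/(x+1)^3)"
    using DERIV_chain2[OF DERIV_real_sqrt[OF h] d1] .
  moreover have "inverse (sqrt (1 - 1/(x+1)^2)) / 2 * (2/(x+1)^3) = 1/((x+1)^3 * ww x)"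
    using assms unfolding ww_def by (simp add: field_simps)
  ultimately show ?thesis unfolding ww_def[abs_def] by simp
qed

definition sig :: "real \<Rightarrow> real \<Rightarrow> real" where
  "sig a x = (- a * ww x + sqrt ((a * ww x)^2 + 4 * ln (1+x)))/2"

lemma sig_props: assumes "x > 0"
  shows "sig a x > 0" "(sig a x)^2 + a * ww x * sig a x = ln (1+x)"
    "2 * sig a x + a * ww x = sqrt ((a * ww x)^2 + 4 * ln (1+x))"
proof -
  define T where "T = sqrt ((a * ww x)^2 + 4 * ln (1+x))"
  have l: "ln (1+x) > 0" using assms by simp
  have T2: "T^2 = (a * ww x)^2 + 4 * ln (1+x)" unfolding T_def using l
    by (simp add: add_nonneg_pos)
  have "(a * ww x)^2 < (a * ww x)^2 + 4 * ln (1+x)" using l by simp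
  then have "sqrt ((a * ww x)^2) < T" unfolding T_def by (rule real_sqrt_less_mono)
  then have Tg: "\<bar>a * ww x\<bar> < T" by simp
  have sd: "sig a x = (T - a * ww x)/2" unfolding sig_def T_def by simp
  show "sig a x > 0" unfolding sd using Tg by simp
  show "2 * sig a x + a * ww x = sqrt ((a * ww x)^2 + 4 * ln (1+x))" unfolding sd T_def[symmetric] by (simp add: field_simps)
  have "(sig a x)^2 + a * ww x * sig a x = (T^2 - (a * ww x)^2)/4"
    unfolding sd by (simp add: power2_eq_square field_simps)
  then show "(sig a x)^2 + a * ww x * sig a x = ln (1+x)" unfolding T2 by simp
qed

lemma sig_unique: assumes "x > 0" "s > 0" "s^2 + a * ww x * s = ln (1+x)"
  shows "s = sig a x"
proof -
  have l: "ln (1+x) > 0" using assms by simp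
  have "s * (s + a * ww x) > 0" using assms(3) l by (simp add: power2_eq_square algebra_simps)
  then have p: "2 * s + a * ww x > 0" using assms(2) by (smt (verit) zero_less_mult_iff)
  have "(2 * s + a * ww x)^2 = (a * ww x)^2 + 4 * ln (1+x)"
    using assms(3)[symmetric] by (simp add: power2_eq_square algebra_simps)
  then have "sqrt ((a * ww x)^2 + 4 * ln (1+x)) = 2 * s + a * ww x"
    using p by (intro real_sqrt_unique) auto
  then show ?thesis unfolding sig_def by simp
qed

lemma sig_deriv: assumes "x > 0"
  shows "DERIV (sig a) x :> (1/(1+x) - a * (1/((x+1)^3 * ww x)) * sig a x) / (2 * sig a x + a * ww x)"
proof -
  define d where "d = 1/((x+1)^3 * ww x)"
  have dw: "DERIV ww x :> d" unfolding d_def using ww_deriv[OF assms] .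
  have l: "ln (1+x) > 0" using assms by simp
  have pA: "(a * ww x)^2 + 4 * ln (1+x) > 0" using l by (simp add: add_nonneg_pos)
  have dA: "DERIV (\<lambda>x. (a * ww x)^2 + 4 * ln (1+x)) x :> 2 * (a * ww x) * (a * d) + 4 * (1/(1+x))"
    using assms by (auto intro!: derivative_eq_intros dw simp: field_simps) (simp add: algebra_simps power2_eq_square)
  have dS: "DERIV (\<lambda>x. sqrt ((a * ww x)^2 + 4 * ln (1+x))) x :>
     inverse (sqrt ((a * ww x)^2 + 4 * ln (1+x))) / 2 * (2 * (a * ww x) * (a * d) + 4 * (1/(1+x)))"
    using DERIV_chain2[OF DERIV_real_sqrt[OF pA] dA] .
  have dsig: "DERIV (sig a) x :> (- a * d + inverse (sqrt ((a * ww x)^2 + 4 * ln (1+x))) / 2 * (2 * (a * ww x) * (a * d) + 4 * (1/(1+x))))/2"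
    unfolding sig_def[abs_def] using pA assms by (auto intro!: derivative_eq_intros dw dS)
  define T where "T = 2 * sig a x + a * ww x"
  have T: "sqrt ((a * ww x)^2 + 4 * ln (1+x)) = T" unfolding T_def using sig_props(3)[OF assms] by simp
  have Tp: "T > 0" using pA T by (metis real_sqrt_gt_zero)
  have eq: "(- a * d + inverse T / 2 * (2 * (a * ww x) * (a * d) + 4 * (1/(1+x))))/2
     = (1/(1+x) - a * d * sig a x) / T"
  proof -
    have se: "sig a x = (T - a * ww x)/2" unfolding T_def by simp
    have h1: "1 + x \<noteq> 0" "T \<noteq> 0" using Tp assms by auto
    show ?thesis unfolding se using h1 by (simp add: divide_simps) (simp add: algebra_simps)
  qed
  have "DERIV (sig a) x :> (1/(1+x) - a * d * sig a x) / T" using dsig unfolding T eq .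
  then show ?thesis unfolding T_def d_def .
qed



lemma polyB:
  fixes t :: real assumes t: "t > 0"
  shows "t^2/((2+t)*(1+t)) * (6*(t+1)^3/(t*(t+3)^2) + 2*(t+1)*(t+2)/(t*(t+3)) - 1) > t/(1+t)"
proof -
  have "6*(t+1)^2 > 2*(t+3)" using t by (simp add: power2_eq_square algebra_simps) (simp add: add_pos_pos)
  then have "6*(t+1)^3 + 2*(t+1)*(t+2)*(t+3) > 2*(t+1)*(t+3)^2 "
    using t by (simp add: power2_eq_square power3_eq_cube algebra_simps) (simp add: add_pos_pos)
  then have "t*(6*(t+1)^3 + 2*(t+1)*(t+2)*(t+3) - t*(t+3)^2) > t*((2+t)*(t+3)^2)"
    using t by (simp add: power2_eq_square power3_eq_cube algebra_simps) (simp add: add_pos_pos)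
  then have M: "t*M > t*((2+t)*(t+3)^2)" if "M = 6*(t+1)^3 + 2*(t+1)*(t+2)*(t+3) - t*(t+3)^2" for M
    using that by simp
  define M where "M = 6*(t+1)^3 + 2*(t+1)*(t+2)*(t+3) - t*(t+3)^2"
  have Bq: "6*(t+1)^3/(t*(t+3)^2) + 2*(t+1)*(t+2)/(t*(t+3)) - 1 = M/(t*(t+3)^2)"
  proof -
    have nz: "t \<noteq> 0" "t + 3 \<noteq> 0" using t by auto
    have a1: "6*(t+1)^3/(t*(t+3)^2) * (t*(t+3)^2) = 6*(t+1)^3" using nz by simp
    have a2: "2*(t+1)*(t+2)/(t*(t+3)) * (t*(t+3)^2) = 2*(t+1)*(t+2)*(t+3)" using nz by (simp add: power2_eq_square)
    have "(6*(t+1)^3/(t*(t+3)^2) + 2*(t+1)*(t+2)/(t*(t+3)) - 1) * (t*(t+3)^2) = M"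
      unfolding M_def by (simp only: left_diff_distrib distrib_right a1 a2)
    then show ?thesis using nz by (simp add: eq_divide_eq)
  qed
  have L: "t^2/((2+t)*(1+t)) * (M/(t*(t+3)^2)) = (t*M)/((2+t)*(1+t)*(t+3)^2)"
  proof -
    have "t^2/((2+t)*(1+t)) * (M/(t*(t+3)^2)) = (t*(t*M))/(t*((2+t)*(1+t)*(t+3)^2))"
      by (simp add: power2_eq_square mult_ac)
    also have "... = (t*M)/((2+t)*(1+t)*(t+3)^2)" using t by (intro mult_divide_mult_cancel_left) auto
    finally show ?thesis .
  qed
  have pos: "(2+t)*(1+t)*(t+3)^2 > 0" using t by simp
  have "(t*((2+t)*(t+3)^2))/((2+t)*(1+t)*(t+3)^2) < (t*M)/((2+t)*(1+t)*(t+3)^2)"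
    using divide_strict_right_mono[OF M[OF M_def] pos] .
  moreover have "(t*((2+t)*(t+3)^2))/((2+t)*(1+t)*(t+3)^2) = t/(1+t)"
  proof -
    have K: "(2+t)*(t+3)^2 \<noteq> 0" using t by simp
    have "(t*((2+t)*(t+3)^2))/((2+t)*(1+t)*(t+3)^2) = (t*((2+t)*(t+3)^2))/((1+t)*((2+t)*(t+3)^2))"
      by (simp add: mult_ac)
    also have "... = t/(1+t)" using K by (rule mult_divide_mult_cancel_right)
    finally show ?thesis .
  qed
  ultimately show ?thesis unfolding Bq L by simp
qed


lemma alg:
  fixes t w s a l :: real
  assumes t: "t > 0" and w: "w > 0" and w2: "w^2*(t+1)^2 = t*(t+2)" and s: "s > 0"
    and sl: "s^2 + a*w* s = l" and lb: "l \<ge> 2*t/(2+t)" and a: "a \<le> 4/5"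
  shows "2*t*(1/(1+t) - a*(1/((t+1)^3*w))* s) < 2* s^2 + a*w* s"
proof -
  define D where "D = l - t/(1+t)"
  define Dl where "Dl = t^2/((2+t)*(1+t))"
  have "2*t/(2+t) - t/(1+t) = Dl" unfolding Dl_def using t
    by (simp add: field_simps power2_eq_square)
  then have DDl: "D \<ge> Dl" unfolding D_def using lb by simp
  have Dlpos: "Dl > 0" unfolding Dl_def using t by simp
  have Dpos: "D > 0" using DDl Dlpos by simp
  define F where "F = t^2*(t+3)/((t+1)^3*w)"
  have Fpos: "F > 0" unfolding F_def using t w by simp
  have e: "w - 2*t/((t+1)^3*w) = F"
  proof -
    have nz: "(t+1)^3*w \<noteq> 0" using t w by simp
    have "w^2*(t+1)^3 = t*(t+2)*(t+1)" using w2 by (simp add: power3_eq_cube power2_eq_square mult_ac)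
    then have "w*((t+1)^3*w) - 2*t = t^2*(t+3)"
      by (simp add: power2_eq_square algebra_simps)
    then show ?thesis unfolding F_def using nz by (simp add: field_simps)
  qed
  have key: "a* s*F < 2*D"
  proof (cases "a \<le> 0")
    case True
    then have "a* s*F \<le> 0" using s Fpos by (simp add: mult_nonpos_nonneg)
    then show ?thesis using Dpos by simp
  next
    case False
    then have ap: "a > 0" by simp
    define p where "p = a* s"
    have pp: "p > 0" unfolding p_def using ap s by simp
    have "a^2 \<le> (4/5)^2" using ap a by (intro power_mono) auto
    then have "(25/16)*a^2 \<le> 1" by (simp add: power2_eq_square)
    then have "(25/16)*a^2* s^2 \<le> 1* s^2" by (intro mult_right_mono) auto
    then have "(25/16)*a^2* s^2 \<le> s^2" by simp
    then have lp: "(25/16)*p^2 + w*p \<le> l" unfolding p_def using sl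
      by (simp add: power2_eq_square algebra_simps)
    define Q where "Q = 2*D/F"
    have Qpos: "Q > 0" unfolding Q_def using Dpos Fpos by simp
    have Q2: "Q^2 = 4*D^2*(t+1)^4*(t+2)/(t^3*(t+3)^2)"
    proof -
      have "Q^2 = 4*D^2*((t+1)^4*(w^2*(t+1)^2))/(t^4*(t+3)^2)"
        unfolding Q_def F_def using t w by (simp add: field_simps power2_eq_square power3_eq_cube power4_eq_xxxx)
      also have "... = 4*D^2*((t+1)^4*(t*(t+2)))/(t^4*(t+3)^2)" unfolding w2 ..
      also have "... = 4*D^2*(t+1)^4*(t+2)/(t^3*(t+3)^2)" using t
        by (simp add: power2_eq_square power3_eq_cube power4_eq_xxxx)
      finally show ?thesis .
    qed
    have wQ: "w*Q = 2*D*(t+1)*(t+2)/(t*(t+3))"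
    proof -
      have "w*Q = 2*D*((t+1)*(w^2*(t+1)^2))/(t^2*(t+3))"
        unfolding Q_def F_def using t w by (simp add: field_simps power2_eq_square power3_eq_cube)
      also have "... = 2*D*((t+1)*(t*(t+2)))/(t^2*(t+3))" unfolding w2 ..
      also have "... = 2*D*(t+1)*(t+2)/(t*(t+3))" using t
        by (simp add: power2_eq_square)
      finally show ?thesis .
    qed
    define B where "B = 6*(t+1)^3/(t*(t+3)^2) + 2*(t+1)*(t+2)/(t*(t+3)) - 1"
    have pB: "Dl * B > t/(1+t)" unfolding Dl_def B_def using polyB[OF t] .
    have Bpos: "B > 0"
    proof (rule ccontr)
      assume "\<not> B > 0"
      then have "Dl * B \<le> 0" using Dlpos by (simp add: mult_nonneg_nonpos)
      then show False using pB t by (smt (verit) divide_pos_pos)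
    qed
    have h1: "6*Dl*(t+1)^4*(t+2)/(t^3*(t+3)^2) = 6*(t+1)^3/(t*(t+3)^2)"
    proof -
      have "6*Dl*(t+1)^4*(t+2)/(t^3*(t+3)^2) = (6*t^2*(t+1)^4*(t+2))/(((2+t)*(1+t))*(t^3*(t+3)^2))"
        unfolding Dl_def by simp
      also have "... = 6*(t+1)^3/(t*(t+3)^2)"
        using t by (subst frac_eq_eq) (simp_all, algebra)
      finally show ?thesis .
    qed
    have h2: "6*D*(t+1)^4*(t+2)/(t^3*(t+3)^2) \<ge> 6*Dl*(t+1)^4*(t+2)/(t^3*(t+3)^2)"
      using DDl t by (intro divide_right_mono mult_right_mono) auto
    have "(3/2)*Q^2 + w*Q = D * (6*D*(t+1)^4*(t+2)/(t^3*(t+3)^2) + 2*(t+1)*(t+2)/(t*(t+3)))"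
    proof -
      have eq1: "(3/2)*Q^2 = D*(6*D*(t+1)^4*(t+2)/(t^3*(t+3)^2))" unfolding Q2 times_divide_eq_right
        by (rule arg_cong2[where f="(/)"]) (simp_all add: power2_eq_square)
      have eq2: "w*Q = D*(2*(t+1)*(t+2)/(t*(t+3)))" unfolding wQ by simp
      show ?thesis unfolding distrib_left eq1 eq2 ..
    qed
    also have "... \<ge> D * (6*(t+1)^3/(t*(t+3)^2) + 2*(t+1)*(t+2)/(t*(t+3)))"
      using h1 h2 Dpos by (intro mult_left_mono) auto
    finally have g1: "(3/2)*Q^2 + w*Q \<ge> D * (B + 1)" unfolding B_def by simp
    have "D * B \<ge> Dl * B" using DDl Bpos by (simp add: mult_right_mono)
    moreover have "D*(B+1) = D*B + D" by (simp add: algebra_simps)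
    moreover have "l = D + t/(1+t)" unfolding D_def by simp
    ultimately have gQ: "(3/2)*Q^2 + w*Q > l" using g1 pB by linarith
    have "p < Q"
    proof (rule ccontr)
      assume "\<not> p < Q"
      then have "Q \<le> p" by simp
      then have "Q^2 \<le> p^2" using Qpos by (intro power_mono) auto
      moreover have "w*Q \<le> w*p" using \<open>Q \<le> p\<close> w by (intro mult_left_mono) auto
      moreover have "0 \<le> p^2" by simp
      ultimately have "(3/2)*Q^2 + w*Q \<le> (25/16)*p^2 + w*p" by linarith
      then show False using lp gQ by simp
    qed
    then have "p * F < 2*D" unfolding Q_def using Fpos by (simp add: pos_less_divide_eq)
    then show ?thesis unfolding p_def .
  qed
  have g1: "2*t*(1/(1+t) - a*(1/((t+1)^3*w))* s) = 2*t/(1+t) - a* s*(2*t/((t+1)^3*w))"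
    by (simp add: algebra_simps)
  have g2: "a* s*(w - 2*t/((t+1)^3*w)) = a*w* s - a* s*(2*t/((t+1)^3*w))"
    by (simp add: algebra_simps)
  have g3: "2*t/(1+t) = 2*(t/(1+t))" by simp
  have "a* s*F = a*w* s - a* s*(2*t/((t+1)^3*w))" using g2 e by simp
  then show ?thesis unfolding g1 g3 using key sl D_def by linarith
qed



lemma sig_mono: assumes a: "a \<le> 4/5" and xy: "0 < x" "x < y" shows "sig a x < sig a y"
proof (rule DERIV_pos_imp_increasing[OF xy(2)])
  fix t assume "x \<le> t" "t \<le> y"
  then have t: "t > 0" using xy by simp
  let ?s = "sig a t" and ?w = "ww t" and ?d = "1/((t+1)^3 * ww t)"
  have sp: "?s > 0" and sl: "?s^2 + a * ?w * ?s = ln (1+t)"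
    and sT: "2 * ?s + a * ?w = sqrt ((a * ?w)^2 + 4 * ln (1+t))" using sig_props[OF t] by auto
  have w2: "?w^2 * (t+1)^2 = t*(t+2)" and wp: "?w > 0" using ww_sq[OF t] by auto
  have l: "ln (1+t) > 0" using t by simp
  have Tp: "2 * ?s + a * ?w > 0" unfolding sT using l by (simp add: add_nonneg_pos)
  have dp: "?d > 0" using t wp by simp
  have num: "a * ?d * ?s < 1/(1+t)"
  proof (cases "a \<le> 0")
    case True
    then have "a * ?d * ?s \<le> 0" using dp sp by (intro mult_nonpos_nonneg) (auto intro: mult_nonpos_nonneg)
    moreover have "1/(1+t) > 0" using t by simp
    ultimately show ?thesis by linarith
  next
    case False
    have "a * ?w * ?s > 0" using False sp wp by simp
    then have "?s^2 \<le> ln (1+t)" using sl by linarith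
    also have "... \<le> t" using t by (intro ln_add_one_self_le_self) simp
    also have "t < ((t+1)^2 * ?w)^2"
    proof -
      have "((t+1)^2 * ?w)^2 = (t+1)^2 * (?w^2 * (t+1)^2)" by (simp add: power2_eq_square mult_ac)
      also have "... = (t+1)^2 * (t*(t+2))" unfolding w2 ..
      finally have e: "((t+1)^2 * ?w)^2 = t * ((t+1)^2 * (t+2))" by simp
      have "1 \<le> (t+1)^2" using t by (intro one_le_power) simp
      then have "1 * (t+2) \<le> (t+1)^2 * (t+2)" using t by (intro mult_right_mono) auto
      then have "t + 2 \<le> (t+1)^2 * (t+2)" by simp
      then have "1 < (t+1)^2 * (t+2)" using t by linarith
      then have "t * 1 < t * ((t+1)^2 * (t+2))" using t by (rule mult_strict_left_mono)
      then show ?thesis unfolding e by simp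
    qed
    finally have "?s^2 < ((t+1)^2 * ?w)^2" .
    then have "?s < (t+1)^2 * ?w" by (rule power_less_imp_less_base) (use wp t in simp)
    then have "?d * ?s < ?d * ((t+1)^2 * ?w)" using dp by (rule mult_strict_left_mono)
    also have "?d * ((t+1)^2 * ?w) = 1/(1+t)"
    proof -
      have c: "(t+1)^3 * ?w = (t+1) * ((t+1)^2 * ?w)" by (simp add: power3_eq_cube power2_eq_square mult_ac)
      have nz: "(t+1)^2 * ?w \<noteq> 0" using t wp by simp
      have "?d * ((t+1)^2 * ?w) = ((t+1)^2 * ?w) / ((t+1) * ((t+1)^2 * ?w))" unfolding c by simp
      also have "... = 1/(t+1)" using nz by simp
      finally show ?thesis by (simp add: add.commute)
    qed
    finally have "?d * ?s < 1/(1+t)" .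
    moreover have "a * (?d * ?s) \<le> 1 * (?d * ?s)" using False a dp sp
      by (intro mult_right_mono) auto
    ultimately show ?thesis by (simp add: mult.assoc)
  qed
  have "(1/(1+t) - a * ?d * ?s) / (2 * ?s + a * ?w) > 0" using num Tp by (intro divide_pos_pos) auto
  then show "\<exists>D. DERIV (sig a) t :> D \<and> 0 < D"
    using sig_deriv[OF t, of a] by blast
qed

lemma rho_mono: assumes a: "a \<le> 4/5" and xy: "0 < x" "x < y"
  shows "(sig a y)^2 / y < (sig a x)^2 / x"
proof (rule DERIV_neg_imp_decreasing[OF xy(2)])
  fix t assume "x \<le> t" "t \<le> y"
  then have t: "t > 0" using xy by simp
  let ?s = "sig a t" and ?w = "ww t" and ?d = "1/((t+1)^3 * ww t)"
  define T where "T = 2 * ?s + a * ?w"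
  define sd where "sd = (1/(1+t) - a * ?d * ?s) / T"
  have sp: "?s > 0" and sl: "?s^2 + a * ?w * ?s = ln (1+t)"
    and sT: "T = sqrt ((a * ?w)^2 + 4 * ln (1+t))" using sig_props[OF t] T_def by auto
  have w2: "?w^2 * (t+1)^2 = t*(t+2)" and wp: "?w > 0" using ww_sq[OF t] by auto
  have l: "ln (1+t) > 0" using t by simp
  have Tp: "T > 0" unfolding sT using l by (simp add: add_nonneg_pos)
  have ds: "DERIV (sig a) t :> sd" unfolding sd_def T_def using sig_deriv[OF t] .
  have df: "DERIV (\<lambda>t. (sig a t)^2 / t) t :> (2 * ?s * sd * t - ?s^2) / t^2"
  proof -
    have d2: "DERIV (\<lambda>x. (sig a x)^2) t :> of_nat 2 * (sd * ?s ^ (2 - Suc 0))"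
      by (rule DERIV_power[OF ds])
    have "DERIV (\<lambda>t. (sig a t)^2 / t) t :> ((of_nat 2 * (sd * ?s ^ (2 - Suc 0))) * t - ?s^2 * 1) / (t * t)"
      using t by (intro DERIV_divide[OF d2] DERIV_ident) auto
    then show ?thesis by (simp add: power2_eq_square mult_ac)
  qed
  have al: "2*t*(1/(1+t) - a*(1/((t+1)^3*?w))*?s) < 2*?s^2 + a*?w*?s"
    using alg[OF t wp w2 sp sl ln_lower[OF less_imp_le[OF t]] a] .
  have "2 * t * sd < ?s"
  proof -
    have "2 * t * sd = 2*t*(1/(1+t) - a*(1/((t+1)^3*?w))*?s) / T" unfolding sd_def by simp
    also have "... < (2*?s^2 + a*?w*?s) / T" using al Tp by (simp add: divide_strict_right_mono)
    also have "2*?s^2 + a*?w*?s = ?s * T" unfolding T_def by (simp add: power2_eq_square algebra_simps)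
    also have "?s * T / T = ?s" using Tp by simp
    finally show ?thesis .
  qed
  then have "?s * (2 * t * sd) < ?s * ?s" using sp by simp
  then have "2 * ?s * sd * t - ?s^2 < 0" by (simp add: power2_eq_square mult_ac)
  then have "(2 * ?s * sd * t - ?s^2) / t^2 < 0" using t by (simp add: divide_neg_pos)
  then show "\<exists>D. DERIV (\<lambda>t. (sig a t)^2 / t) t :> D \<and> D < 0" using df by blast
qed



theorem lemma1:
  fixes N :: nat and eps mhat :: real and \<Gamma> :: "real \<Rightarrow> real"
  assumes "N > 0"
    and "0 < eps" and "eps < 1"
    and "mhat > 0"
    and "\<And>m. m \<ge> mhat \<Longrightarrow> \<Gamma> m > 0 \<and> Ffb N eps m (\<Gamma> m) = 0"
    and "gaussQinv eps / sqrt (real N) \<le> 2 * sqrt (ln 2) / (4 - sqrt 2)"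
  shows "\<forall>m1 m2. mhat \<le> m1 \<longrightarrow> m1 < m2 \<longrightarrow> m2 * \<Gamma> m2 < m1 * \<Gamma> m1"
proof -
  define q where "q = gaussQinv eps"
  define K where "K = real N * ln 2"
  define a where "a = q / sqrt K"
  have Kp: "K > 0" unfolding K_def using assms(1) by simp
  have l2: "ln (2::real) > 0" by simp
  have ha: "a \<le> 4/5"
  proof -
    have sK: "sqrt K = sqrt (real N) * sqrt (ln 2)" unfolding K_def by (simp add: real_sqrt_mult)
    have "a = (q / sqrt (real N)) / sqrt (ln 2)" unfolding a_def sK by simp
    also have "... \<le> (2 * sqrt (ln 2) / (4 - sqrt 2)) / sqrt (ln 2)"
      using assms(6) l2 unfolding q_def by (intro divide_right_mono) auto
    also have "... = 2 / (4 - sqrt 2)" using l2 by simp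
    also have "... \<le> 4/5"
    proof -
      have "sqrt 2 < sqrt (9/4)" by (intro real_sqrt_less_mono) simp
      also have "sqrt (9/4) = (3/2::real)"
        by (rule real_sqrt_unique) (simp_all add: power2_eq_square)
      finally have "sqrt 2 < (3/2::real)" .
      then show ?thesis by (simp add: divide_simps)
    qed
    finally show ?thesis .
  qed
  have key: "\<Gamma> m > 0 \<and> sqrt (K/m) = sig a (\<Gamma> m) \<and> m = K / (sqrt (K/m))^2" if m: "mhat \<le> m" for m
  proof -
    have mp: "m > 0" using m assms(4) by simp
    define g where "g = \<Gamma> m"
    have gp: "g > 0" and F: "Ffb N eps m g = 0" using assms(5)[OF m] unfolding g_def by auto
    define s where "s = sqrt (K/m)"
    have sp: "s > 0" unfolding s_def using Kp mp by simp
    have s2: "s^2 = K/m" unfolding s_def using Kp mp by simp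
    have sq: "sqrt ((1/m) * (1 - 1/(g+1)^2)) = sqrt (1/m) * ww g" unfolding ww_def by (rule real_sqrt_mult)
    have lg: "log 2 (1+g) = ln (1+g) / ln 2" by (simp add: log_def)
    have "sqrt (1/m) * ww g * q / ln 2 - ln (1+g) / ln 2 + real N / m = 0"
      using F unfolding Ffb_def sq lg q_def .
    then have "(sqrt (1/m) * ww g * q / ln 2 - ln (1+g) / ln 2 + real N / m) * ln 2 = 0" by simp
    then have e1: "sqrt (1/m) * ww g * q - ln (1+g) + K / m = 0"
      using l2 unfolding K_def by (simp add: algebra_simps diff_divide_distrib add_divide_distrib)
    have "a * ww g * s = sqrt (1/m) * ww g * q"
    proof -
      have "s = sqrt K * sqrt (1/m)" unfolding s_def by (simp add: real_sqrt_mult[symmetric])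
      then show ?thesis unfolding a_def using Kp by simp
    qed
    then have "s^2 + a * ww g * s = ln (1+g)" using e1 s2 by linarith
    then have "s = sig a g" using sig_unique[OF gp sp] by blast
    moreover have "m = K / s^2" unfolding s2 using mp Kp by simp
    ultimately show ?thesis using gp unfolding g_def s_def by simp
  qed
  show ?thesis
  proof (intro allI impI)
    fix m1 m2 assume m1: "mhat \<le> m1" and m12: "m1 < m2"
    have m2: "mhat \<le> m2" using m1 m12 by simp
    define g1 where "g1 = \<Gamma> m1"
    define g2 where "g2 = \<Gamma> m2"
    define s1 where "s1 = sqrt (K/m1)"
    define s2 where "s2 = sqrt (K/m2)"
    have g1p: "g1 > 0" and s1e: "s1 = sig a g1" and m1e: "m1 = K / s1^2"
      using key[OF m1] unfolding g1_def s1_def by auto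
    have g2p: "g2 > 0" and s2e: "s2 = sig a g2" and m2e: "m2 = K / s2^2"
      using key[OF m2] unfolding g2_def s2_def by auto
    have s1p: "s1 > 0" using s1e sig_props(1)[OF g1p] by simp
    have s2p: "s2 > 0" using s2e sig_props(1)[OF g2p] by simp
    have g21: "g2 < g1"
    proof (rule ccontr)
      assume "\<not> g2 < g1"
      then have "g1 \<le> g2" by simp
      then have "s1 \<le> s2"
      proof (cases "g1 = g2")
        case True then show ?thesis using s1e s2e by simp
      next
        case False then have "g1 < g2" using \<open>g1 \<le> g2\<close> by simp
        then have "sig a g1 < sig a g2" by (rule sig_mono[OF ha g1p])
        then show ?thesis using s1e s2e by simp
      qed
      then have "s1^2 \<le> s2^2" using s1p by (intro power_mono) auto
      then have "K / s2^2 \<le> K / s1^2" using Kp s1p s2p by (intro divide_left_mono) auto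
      then show False using m1e m2e m12 by simp
    qed
    have r: "s1^2 / g1 < s2^2 / g2" using rho_mono[OF ha g2p g21] s1e s2e by simp
    have e1: "m1 * g1 = K / (s1^2 / g1)" using m1e by simp
    have e2: "m2 * g2 = K / (s2^2 / g2)" using m2e by simp
    have "K / (s2^2 / g2) < K / (s1^2 / g1)"
      using r Kp s1p g1p s2p g2p by (intro divide_strict_left_mono) auto
    then show "m2 * \<Gamma> m2 < m1 * \<Gamma> m1" using e1 e2 unfolding g1_def g2_def by simp
  qed
qed


end
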